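(* Let $\mathcal M_t$, $t\ge0$, be the moment generating function of the free Jacobi process with parameters $\lambda=1$, $\theta=1/2$ and initial spectral distribution $\delta_1$, i.e. the solution of $$\partial_t\mathcal M_t(z)=-\frac z2\,\partial_z\big\{(1-z)\mathcal M_t(z)^2\big\},\qquad \mathcal M_0(z)=\frac1{1-z},$$ and let $\mathcal S_t^{(1,1/2)}$ be its $S$ transform (so $\mathcal S_0^{(1,1/2)}\equiv1$). For $t\ge0$ define, near $u=1$, $\xi_{2t}(u)=\frac{u-1}{u+1}e^{ut}$ and, near $z=0$ (with the principal branch of the square root), $$\kappa_t(z)=\frac{(1+\sqrt{1+z})\,\xi_{2t}(\sqrt{1+z})+(\sqrt{1+z}-1)}{1-\xi_{2t}(\sqrt{1+z})}.$$ Then $\kappa_t(0)=0$, $\kappa_t$ is locally invertible around $0$, and locally around $z=0$ $$\mathcal S_t^{(1,1/2)}(z)=\frac{z^2+2z-\kappa_t^{-1}(z)}{z(1+z)}=\mathcal S_\infty^{(1,1/2)}(z)-\frac{\kappa_t^{-1}(z)}{z(1+z)},\qquad \mathcal S_\infty^{(1,1/2)}(z)=\frac{z+2}{z+1}.$$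
   Context: The $S$ transform of a moment generating function $\mathcal M$ with nonzero first moment is $\mathcal S(z)=\frac{1+z}{z}\eta(z)$, where $\eta$ is the local inverse near $0$ of $\mathcal M-1$. The function $\xi_{2t}$ is the inverse, in a neighbourhood of $1$, of the Herglotz transform of the spectral distribution of the free unitary Brownian motion at time $2t$. *)

theory Defs
  imports "HOL-Analysis.Analysis"
begin

text \<open>xi_{2t}(u) = (u-1)/(u+1) e^{ut}, the inverse near 1 of the Herglotz transform
  of the free unitary Brownian motion at time 2t.\<close>
definition xi2 :: "real \<Rightarrow> complex \<Rightarrow> complex" where
  "xi2 t u = (u - 1) / (u + 1) * exp (u * complex_of_real t)"

definition kappa :: "real \<Rightarrow> complex \<Rightarrow> complex" where
  "kappa t z = ((1 + csqrt (1 + z)) * xi2 t (csqrt (1 + z)) + (csqrt (1 + z) - 1))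
               / (1 - xi2 t (csqrt (1 + z)))"

definition local_inverse_at0 :: "(complex \<Rightarrow> complex) \<Rightarrow> (complex \<Rightarrow> complex) \<Rightarrow> bool" where
  "local_inverse_at0 f g \<longleftrightarrow>
     (\<exists>U V. open U \<and> open V \<and> 0 \<in> U \<and> 0 \<in> V \<and> f ` U = V \<and>
            (\<forall>z\<in>U. g (f z) = z) \<and> (\<forall>w\<in>V. g w \<in> U \<and> f (g w) = w))"

text \<open>S transform built from a local inverse eta of (M - 1): S(z) = (1+z)/z * eta(z).\<close>
definition S_transform :: "(complex \<Rightarrow> complex) \<Rightarrow> complex \<Rightarrow> complex" where
  "S_transform eta z = (1 + z) / z * eta z"

end

theory Submission imports Defs "HOL-Complex_Analysis.Complex_Analysis" begin

definition cp :: "real \<Rightarrow> real \<Rightarrow> complex" where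
  "cp r x = of_real r * exp(2 * of_real pi * \<i> * of_real x)"

lemma norm_cp [simp]: "r \<ge> 0 \<Longrightarrow> norm (cp r x) = r"
  by (simp add: cp_def norm_mult)

lemma continuous_on_cp [continuous_intros]: "continuous_on S f \<Longrightarrow> continuous_on S (\<lambda>x. cp r (f x))"
  unfolding cp_def by (intro continuous_intros)

lemma cauchy_int:
  fixes f :: "complex \<Rightarrow> complex"
  assumes hol: "f holomorphic_on ball 0 1" and r: "0 < r" "r < 1" and w: "norm w < r"
  shows "(deriv ^^ k) f w = fact k * integral {0..1}
      (\<lambda>x. f (cp r x) / (cp r x - w) ^ Suc k * cp r x)"
proof -
  have sub: "cball 0 r \<subseteq> ball (0::complex) 1" using r by auto
  have "continuous_on (cball 0 r) f"
    using holomorphic_on_imp_continuous_on[OF hol] continuous_on_subset sub by blast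
  moreover have "f holomorphic_on ball 0 r" by (rule holomorphic_on_subset[OF hol]) (use r in auto)
  ultimately have "((\<lambda>u. f u / (u-w) ^ (Suc k)) has_contour_integral ((2 * pi * \<i>) / (fact k) * (deriv ^^ k) f w))
           (circlepath 0 r)"
    by (intro Cauchy_has_contour_integral_higher_derivative_circlepath) (use w in auto)
  then have "contour_integral (circlepath 0 r) (\<lambda>u. f u / (u-w) ^ (Suc k)) = (2 * pi * \<i>) / (fact k) * (deriv ^^ k) f w"
    using contour_integral_unique by blast
  moreover have "contour_integral (circlepath 0 r) (\<lambda>u. f u / (u-w) ^ (Suc k)) =
     (2 * pi * \<i>) * integral {0..1}
      (\<lambda>x. f (cp r x) / (cp r x - w) ^ Suc k * cp r x)"
    unfolding contour_integral_integral vector_derivative_circlepath unfolding circlepath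
    by (subst integral_mult_right[symmetric]) (simp add: cp_def algebra_simps)
  ultimately show ?thesis by (simp add: field_simps)
qed

lemma comp_cont_cp:
  fixes F :: "real \<Rightarrow> complex \<Rightarrow> complex"
  assumes cont: "continuous_on (T \<times> ball 0 1) (\<lambda>(s,z). F s z)" and r: "0 \<le> r" "r < 1"
  shows "continuous_on ((T \<times> Z) \<times> X) (\<lambda>(p,x). F (fst p) (cp r x))"
proof -
  have "continuous_on ((T \<times> Z) \<times> X) (\<lambda>q. (\<lambda>(s,z). F s z) ((\<lambda>q. (fst (fst q), cp r (snd q))) q))"
    by (rule continuous_on_compose2[OF cont]) (use r in \<open>auto intro!: continuous_intros\<close>)
  then show ?thesis by (simp add: split_beta)
qed

lemma deriv_joint_cont:
  fixes F :: "real \<Rightarrow> complex \<Rightarrow> complex"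
  assumes hol: "\<And>s. s \<in> T \<Longrightarrow> F s holomorphic_on ball 0 1"
    and cont: "continuous_on (T \<times> ball 0 1) (\<lambda>(s,z). F s z)"
  shows "continuous_on (T \<times> ball 0 (5/8)) (\<lambda>(s,z). deriv (F s) z)"
proof -
  have eq: "deriv (F s) z = integral (cbox 0 1) (\<lambda>x. F s (cp (3/4) x) / (cp (3/4) x - z)^2 * cp (3/4) x)"
    if "s \<in> T" "z \<in> ball 0 (5/8)" for s z
    using cauchy_int[OF hol[OF that(1)], of "3/4" z 1] that by (simp add: numeral_2_eq_2)
  have c1: "continuous_on ((T \<times> ball 0 (5/8)) \<times> cbox 0 1) (\<lambda>(p,x). F (fst p) (cp (3/4) x))"
    by (rule comp_cont_cp[OF cont]) auto
  have c2: "continuous_on ((T \<times> ball 0 (5/8)) \<times> cbox 0 1) (\<lambda>(p,x::real). (cp (3/4) x - snd p :: complex))"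
    by (auto simp: split_beta intro!: continuous_intros)
  have nz: "cp (3/4) x - snd p \<noteq> 0" if "(p,x) \<in> (T \<times> ball 0 (5/8)) \<times> cbox 0 1" for p x
  proof
    assume "cp (3/4) x - snd p = 0"
    then have "norm (snd p) = 3/4" by (metis eq_iff_diff_eq_0 norm_cp zero_le_divide_iff zero_le_numeral)
    with that show False by auto
  qed
  have "continuous_on ((T \<times> ball 0 (5/8)) \<times> cbox 0 1)
     (\<lambda>q. (\<lambda>(p,x). F (fst p) (cp (3/4) x)) q / ((\<lambda>(p,x::real). (cp (3/4) x - snd p :: complex)) q)^2 * cp (3/4) (snd q))"
    using nz by (intro continuous_intros c1 c2) (auto simp: split_beta)
  then have "continuous_on ((T \<times> ball 0 (5/8)) \<times> cbox 0 1)
     (\<lambda>(p,x). F (fst p) (cp (3/4) x) / (cp (3/4) x - snd p)^2 * cp (3/4) x)"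
    by (simp add: split_beta)
  then have "continuous_on (T \<times> ball 0 (5/8))
     (\<lambda>p. integral (cbox 0 1) (\<lambda>x. F (fst p) (cp (3/4) x) / (cp (3/4) x - snd p)^2 * cp (3/4) x))"
    by (rule integral_continuous_on_param)
  then show ?thesis
    by (rule continuous_on_eq) (auto simp: eq)
qed

lemma comp_cont_cp2:
  fixes F :: "real \<Rightarrow> complex \<Rightarrow> complex"
  assumes cont: "continuous_on (T \<times> ball 0 R) (\<lambda>(s,z). F s z)" and r: "0 \<le> r" "r < R"
  shows "continuous_on (T \<times> X) (\<lambda>(s,x). F s (cp r x))"
proof -
  have "continuous_on (T \<times> X) (\<lambda>q. (\<lambda>(s,z). F s z) ((\<lambda>q. (fst q, cp r (snd q))) q))"
    by (rule continuous_on_compose2[OF cont]) (use r in \<open>auto intro!: continuous_intros\<close>)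
  then show ?thesis by (simp add: split_beta)
qed

lemma cp_nz: "r > 0 \<Longrightarrow> cp r x \<noteq> 0"
  by (simp add: cp_def)

lemma coeff_has_deriv:
  fixes P A :: "real \<Rightarrow> complex \<Rightarrow> complex"
  assumes holP: "\<And>s. s \<ge> 0 \<Longrightarrow> P s holomorphic_on ball 0 1"
    and holA: "\<And>s. s \<ge> 0 \<Longrightarrow> A s holomorphic_on ball 0 1"
    and der: "\<And>s z. s \<ge> 0 \<Longrightarrow> z \<in> ball 0 1 \<Longrightarrow> ((\<lambda>r. P r z) has_vector_derivative A s z) (at s within {0..})"
    and contA: "continuous_on ({0..} \<times> ball 0 (5/8)) (\<lambda>(s,z). A s z)"
    and s: "s \<ge> 0"
  shows "((\<lambda>r. (deriv ^^ n) (P r) 0) has_vector_derivative (deriv ^^ n) (A s) 0) (at s within {0..})"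
proof -
  define f where "f = (\<lambda>r x. P r (cp (1/2) x) / cp (1/2) x ^ Suc n * cp (1/2) x)"
  define fx where "fx = (\<lambda>r x. A r (cp (1/2) x) / cp (1/2) x ^ Suc n * cp (1/2) x)"
  have eqP: "(deriv ^^ n) (P r) 0 = fact n * integral (cbox 0 1) (f r)" if "r \<in> {0..}" for r
    using cauchy_int[OF holP, of r "1/2" 0 n] that by (simp add: f_def)
  have eqA: "(deriv ^^ n) (A s) 0 = fact n * integral (cbox 0 1) (fx s)"
    using cauchy_int[OF holA, of s "1/2" 0 n] s by (simp add: fx_def)
  have L: "((\<lambda>r. integral (cbox 0 1) (f r)) has_vector_derivative integral (cbox 0 1) (fx s)) (at s within {0..})"
  proof (rule leibniz_rule_vector_derivative)
    fix r :: real and x :: real assume r: "r \<in> {0..}" and x: "x \<in> cbox 0 1"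
    have "((\<lambda>r. P r (cp (1/2) x)) has_vector_derivative A r (cp (1/2) x)) (at r within {0..})"
      using der[of r "cp (1/2) x"] r by simp
    then show "((\<lambda>r. f r x) has_vector_derivative fx r x) (at r within {0..})"
      unfolding f_def fx_def by (intro derivative_intros)
  next
    fix r :: real assume r: "r \<in> {0..}"
    have "continuous_on (ball 0 1) (P r)" using holP[of r] r holomorphic_on_imp_continuous_on by auto
    then have "continuous_on (cbox 0 1) (\<lambda>x. P r (cp (1/2) x))"
      by (rule continuous_on_compose2) (auto intro!: continuous_intros)
    then have "continuous_on (cbox 0 1) (f r)"
      unfolding f_def by (intro continuous_intros) (auto simp: cp_nz)
    then show "f r integrable_on cbox 0 1" by (rule integrable_continuous)
  next
    have "continuous_on ({0..} \<times> cbox 0 1) (\<lambda>(r,x). A r (cp (1/2) x))"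
      by (rule comp_cont_cp2[OF contA]) auto
    then show "continuous_on ({0..} \<times> cbox 0 1) (\<lambda>(r, x). fx r x)"
      unfolding fx_def split_beta by (intro continuous_intros) (auto simp: cp_nz split_beta)
  qed (use s in auto)
  have "((\<lambda>r. fact n * integral (cbox 0 1) (f r)) has_vector_derivative fact n * integral (cbox 0 1) (fx s)) (at s within {0..})"
    by (rule has_vector_derivative_mult_right[OF L])
  then show ?thesis
    unfolding eqA[symmetric] by (rule has_vector_derivative_transform[rotated 2]) (use s eqP in auto)
qed

lemma higher_deriv_zmult:
  fixes G :: "complex \<Rightarrow> complex"
  assumes hol: "G holomorphic_on ball 0 1"
  shows "(deriv ^^ n) (\<lambda>z. z * G z) 0 = of_nat n * (deriv ^^ (n - 1)) G 0"
proof -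
  have "(deriv ^^ n) (\<lambda>z. z * G z) 0 =
     (\<Sum>i = 0..n. of_nat (n choose i) * (deriv ^^ i) (\<lambda>w. w) 0 * (deriv ^^ (n-i)) G 0)"
    by (rule higher_deriv_mult[OF _ hol]) (auto intro: holomorphic_intros)
  also have "\<dots> = (\<Sum>i = 0..n. if i = 1 then of_nat n * (deriv ^^ (n - 1)) G 0 else 0)"
    by (rule sum.cong) auto
  also have "\<dots> = of_nat n * (deriv ^^ (n - 1)) G 0"
    by (subst sum.delta) auto
  finally show ?thesis .
qed

lemma higher_deriv_deriv: "(deriv ^^ m) (deriv f) = (deriv ^^ Suc m) f"
  unfolding funpow_Suc_right by simp

lemma coeff_rel:
  fixes B U P :: "complex \<Rightarrow> complex"
  assumes hB: "B holomorphic_on ball 0 1" and hU: "U holomorphic_on ball 0 1"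
    and hP: "P holomorphic_on ball 0 1" and B0: "B 0 = 1" and U0: "U 0 = 1"
    and low: "\<And>k. k < n \<Longrightarrow> (deriv ^^ k) P 0 = 0"
  shows "(deriv ^^ n) (\<lambda>z. - (z * (B z * deriv P z)) + U z * P z) 0 = (1 - of_nat n) * (deriv ^^ n) P 0"
proof -
  have hdP: "deriv P holomorphic_on ball 0 1" by (rule holomorphic_deriv[OF hP]) auto
  have h1: "(\<lambda>z. B z * deriv P z) holomorphic_on ball 0 1" by (rule holomorphic_on_mult[OF hB hdP])
  have h2: "(\<lambda>z. z * (B z * deriv P z)) holomorphic_on ball 0 1" by (rule holomorphic_on_mult[OF _ h1]) (auto intro: holomorphic_intros)
  have h3: "(\<lambda>z. U z * P z) holomorphic_on ball 0 1" using hU hP by (intro holomorphic_intros)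
  have "(deriv ^^ n) (\<lambda>z. - (z * (B z * deriv P z)) + U z * P z) 0 =
        (deriv ^^ n) (\<lambda>z. - (z * (B z * deriv P z))) 0 + (deriv ^^ n) (\<lambda>z. U z * P z) 0"
    by (rule higher_deriv_add) (use h2 h3 in \<open>auto intro: holomorphic_intros\<close>)
  also have "(deriv ^^ n) (\<lambda>z. - (z * (B z * deriv P z))) 0 = - ((deriv ^^ n) (\<lambda>z. z * (B z * deriv P z)) 0)"
    by (rule higher_deriv_uminus[OF h2]) auto
  also have "(deriv ^^ n) (\<lambda>z. z * (B z * deriv P z)) 0 = of_nat n * (deriv ^^ (n-1)) (\<lambda>z. B z * deriv P z) 0"
    by (rule higher_deriv_zmult[OF h1])
  also have "of_nat n * (deriv ^^ (n-1)) (\<lambda>z. B z * deriv P z) 0 = of_nat n * (deriv ^^ n) P 0"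
  proof (cases n)
    case 0 then show ?thesis by simp
  next
    case (Suc m)
    have "(deriv ^^ m) (\<lambda>z. B z * deriv P z) 0 =
       (\<Sum>i = 0..m. of_nat (m choose i) * (deriv ^^ i) B 0 * (deriv ^^ (m-i)) (deriv P) 0)"
      by (rule higher_deriv_mult[OF hB hdP]) auto
    also have "\<dots> = (\<Sum>i = 0..m. if i = 0 then (deriv ^^ n) P 0 else 0)"
    proof (rule sum.cong)
      fix i assume "i \<in> {0..m}"
      then show "of_nat (m choose i) * (deriv ^^ i) B 0 * (deriv ^^ (m-i)) (deriv P) 0 =
           (if i = 0 then (deriv ^^ n) P 0 else 0)"
        using low[of "Suc (m - i)"] Suc B0 by (auto simp: higher_deriv_deriv)
    qed simp
    also have "\<dots> = (deriv ^^ n) P 0" by (subst sum.delta) auto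
    finally show ?thesis using Suc by simp
  qed
  also have "(deriv ^^ n) (\<lambda>z. U z * P z) 0 =
       (\<Sum>i = 0..n. of_nat (n choose i) * (deriv ^^ i) U 0 * (deriv ^^ (n-i)) P 0)"
    by (rule higher_deriv_mult[OF hU hP]) auto
  also have "\<dots> = (\<Sum>i = 0..n. if i = 0 then (deriv ^^ n) P 0 else 0)"
  proof (rule sum.cong)
    fix i assume "i \<in> {0..n}"
    then show "of_nat (n choose i) * (deriv ^^ i) U 0 * (deriv ^^ (n-i)) P 0 =
         (if i = 0 then (deriv ^^ n) P 0 else 0)"
      using low[of "n - i"] U0 by auto
  qed simp
  also have "\<dots> = (deriv ^^ n) P 0" by (subst sum.delta) auto
  finally show ?thesis by (simp add: algebra_simps)
qed

lemma ode_zero: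
  fixes D :: "real \<Rightarrow> complex" and a :: complex
  assumes der: "\<And>s. s \<ge> 0 \<Longrightarrow> (D has_vector_derivative a * D s) (at s within {0..})"
    and D0: "D 0 = 0" and t: "t \<ge> 0"
  shows "D t = 0"
proof -
  define E where "E = (\<lambda>r::real. exp (- a * of_real r) * D r)"
  have "(E has_derivative (\<lambda>h. 0)) (at s within {0..})" if s: "s \<in> {0..}" for s
  proof -
    have e: "((\<lambda>x::complex. exp (- a * x)) has_field_derivative (- a * exp (- a * of_real s))) (at (of_real s))"
      by (rule derivative_eq_intros refl | simp)+
    have "((\<lambda>r. exp (- a * of_real r)) has_vector_derivative (- a * exp (- a * of_real s))) (at s within {0..})"
      using has_vector_derivative_real_field[OF e] by simp
    then have "(E has_vector_derivative (exp (- a * of_real s) * (a * D s) + (- a * exp (- a * of_real s)) * D s)) (at s within {0..})"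
      unfolding E_def using der[of s] s by (intro derivative_intros) auto
    then have "(E has_vector_derivative 0) (at s within {0..})"
      by (simp add: algebra_simps)
    then show ?thesis by (simp add: has_vector_derivative_def)
  qed
  then obtain c where c: "\<And>x. x \<in> {0..} \<Longrightarrow> E x = c"
    using has_derivative_zero_constant[of "{0::real..}" E] by (auto simp: convex_real_interval)
  have "E t = E 0" using c t by auto
  then show ?thesis using D0 by (simp add: E_def)
qed

lemma coeff_zero:
  fixes P A B U :: "real \<Rightarrow> complex \<Rightarrow> complex"
  assumes holP: "\<And>s. s \<ge> 0 \<Longrightarrow> P s holomorphic_on ball 0 1"
    and holA: "\<And>s. s \<ge> 0 \<Longrightarrow> A s holomorphic_on ball 0 1"
    and holB: "\<And>s. s \<ge> 0 \<Longrightarrow> B s holomorphic_on ball 0 1"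
    and holU: "\<And>s. s \<ge> 0 \<Longrightarrow> U s holomorphic_on ball 0 1"
    and B0: "\<And>s. s \<ge> 0 \<Longrightarrow> B s 0 = 1" and U0: "\<And>s. s \<ge> 0 \<Longrightarrow> U s 0 = 1"
    and der: "\<And>s z. s \<ge> 0 \<Longrightarrow> z \<in> ball 0 1 \<Longrightarrow> ((\<lambda>r. P r z) has_vector_derivative A s z) (at s within {0..})"
    and contA: "continuous_on ({0..} \<times> ball 0 (5/8)) (\<lambda>(s,z). A s z)"
    and Aeq: "\<And>s z. s \<ge> 0 \<Longrightarrow> z \<in> ball 0 1 \<Longrightarrow> A s z = - (z * (B s z * deriv (P s) z)) + U s z * P s z"
    and P0: "\<And>z. z \<in> ball 0 1 \<Longrightarrow> P 0 z = 0"
    and t: "t \<ge> 0" and z: "z \<in> ball 0 1"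
  shows "P t z = 0"
proof -
  have all: "\<forall>t\<ge>0. (deriv ^^ n) (P t) 0 = 0" for n
  proof (induction n rule: less_induct)
    case (less n)
    show ?case
    proof (intro allI impI)
      fix t :: real assume t: "t \<ge> 0"
      have "(\<lambda>r. (deriv ^^ n) (P r) 0) t = 0"
      proof (rule ode_zero[where a = "1 - of_nat n"])
        fix s :: real assume s: "s \<ge> 0"
        have "(deriv ^^ n) (A s) 0 = (deriv ^^ n) (\<lambda>z. - (z * (B s z * deriv (P s) z)) + U s z * P s z) 0"
        proof (rule higher_deriv_transform_within_open[of _ "ball 0 1"])
          show "(\<lambda>z. - (z * (B s z * deriv (P s) z)) + U s z * P s z) holomorphic_on ball 0 1"
            using holB[OF s] holU[OF s] holP[OF s] holomorphic_deriv[OF holP[OF s]]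
            by (intro holomorphic_intros) auto
        qed (use holA s Aeq in auto)
        also have "\<dots> = (1 - of_nat n) * (deriv ^^ n) (P s) 0"
          by (rule coeff_rel[OF holB holU holP B0 U0]) (use s less in auto)
        finally show "((\<lambda>r. (deriv ^^ n) (P r) 0) has_vector_derivative
                (1 - of_nat n) * (deriv ^^ n) (P s) 0) (at s within {0..})"
          using coeff_has_deriv[OF holP holA der contA s, of n] by simp
      next
        have "(deriv ^^ n) (P 0) 0 = (deriv ^^ n) (\<lambda>z. 0) 0"
          by (rule higher_deriv_transform_within_open[of _ "ball 0 1"]) (use holP P0 in auto)
        then show "(deriv ^^ n) (P 0) 0 = 0" by simp
      qed (use t in auto)
      then show "(deriv ^^ n) (P t) 0 = 0" by simp
    qed
  qed
  show ?thesis
    by (rule holomorphic_fun_eq_0_on_ball[OF holP[OF t] z]) (use all t in auto)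
qed

lemma alg0:
  fixes ut u uz C Cd E s z S :: complex
  assumes "ut = - (z * S * u * uz)" "C = z * S * Cd"
  shows "ut * E + (u - 1) * (E * (ut * s + u)) - C * ut
     = - (z * (S * u * (uz * E + (u - 1) * (E * (uz * s)) - Cd * (u + 1) - C * uz))) + u * ((u - 1) * E - C * (u + 1))"
  unfolding assms by (simp add: algebra_simps)

lemma alg:
  fixes S M0 Mz E s z :: complex
  assumes zS: "z = 1 - S^2" and S: "S \<noteq> 0" and S1: "1 + S \<noteq> 0"
  defines "u \<equiv> S * M0"
  defines "uz \<equiv> (- 1 / (2 * S)) * M0 + S * Mz"
  defines "C \<equiv> (1 - S) / (1 + S)"
  defines "Cd \<equiv> 2 * (1 / (2 * S)) / (1 + S)^2"
  defines "Mt \<equiv> - (z / 2) * (- (M0^2) + (1 - z) * (2 * M0 * Mz))"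
  shows "S * Mt * E + (u - 1) * (E * (S * Mt * s + u)) - C * (S * Mt)
     = - (z * (S * u * (uz * E + (u - 1) * (E * (uz * s)) - Cd * (u + 1) - C * uz))) + u * ((u - 1) * E - C * (u + 1))"
proof (rule alg0)
  show "S * Mt = - (z * S * u * uz)"
    unfolding u_def uz_def Mt_def zS using S by (simp add: field_simps power2_eq_square)
  have "C = (1 - S) * (1 + S) / (1 + S)^2" unfolding C_def using S1 by (simp add: power2_eq_square)
  also have "\<dots> = z / (1 + S)^2" unfolding zS by (simp add: power2_eq_square algebra_simps)
  also have "\<dots> = z * S * Cd" unfolding Cd_def using S by simp
  finally show "C = z * S * Cd" .
qed

definition sq :: "complex \<Rightarrow> complex" where "sq z = csqrt (1 - z)"
definition cc :: "complex \<Rightarrow> complex" where "cc z = (1 - sq z) / (1 + sq z)"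

lemma one_minus_notin: "(z::complex) \<in> ball 0 1 \<Longrightarrow> 1 - z \<notin> \<real>\<^sub>\<le>\<^sub>0"
proof
  assume z: "z \<in> ball 0 1" and "1 - z \<in> \<real>\<^sub>\<le>\<^sub>0"
  then have "Re (1 - z) \<le> 0" by (simp add: complex_nonpos_Reals_iff)
  moreover have "Re z \<le> norm z" by (rule complex_Re_le_cmod)
  ultimately show False using z by auto
qed

lemma sq_hol: "sq holomorphic_on ball 0 1"
  unfolding sq_def by (intro holomorphic_intros) (use one_minus_notin in blast)

lemma sq_sq: "sq z ^ 2 = 1 - z"
  by (simp add: sq_def)

lemma sq_nz: "z \<in> ball 0 1 \<Longrightarrow> sq z \<noteq> 0"
  unfolding sq_def by auto

lemma sq_1: "1 + sq z \<noteq> 0"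
proof
  assume "1 + sq z = 0"
  then have "Re (1 + sq z) = 0" by simp
  moreover have "Re (sq z) \<ge> 0" unfolding sq_def by (rule Re_csqrt)
  ultimately show False by simp
qed

lemma sq_0 [simp]: "sq 0 = 1" by (simp add: sq_def)

lemma sq_deriv: "z \<in> ball 0 1 \<Longrightarrow> (sq has_field_derivative (- 1 / (2 * sq z))) (at z)"
  unfolding sq_def
  by (rule derivative_eq_intros refl | simp add: one_minus_notin)+

lemma cc_deriv: "z \<in> ball 0 1 \<Longrightarrow> (cc has_field_derivative 2 * (1 / (2 * sq z)) / (1 + sq z)^2) (at z)"
proof -
  assume z: "z \<in> ball 0 1"
  have "((\<lambda>w. (1 - sq w) / (1 + sq w)) has_field_derivative
        ((- (- 1 / (2 * sq z))) * (1 + sq z) - (1 - sq z) * (- 1 / (2 * sq z))) / (1 + sq z)^2) (at z)"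
    using sq_deriv[OF z] sq_1[of z] by (auto intro!: derivative_eq_intros simp: power2_eq_square)
  moreover have "((- (- 1 / (2 * sq z))) * (1 + sq z) - (1 - sq z) * (- 1 / (2 * sq z))) / (1 + sq z)^2
      = 2 * (1 / (2 * sq z)) / (1 + sq z)^2"
    using sq_nz[OF z] sq_1[of z] by (simp add: divide_simps)
  ultimately show ?thesis by (simp add: cc_def[abs_def])
qed

lemma cc_hol: "cc holomorphic_on ball 0 1"
  unfolding cc_def using sq_hol sq_1 by (intro holomorphic_intros) auto

locale jac =
  fixes M :: "real \<Rightarrow> complex \<Rightarrow> complex"
  assumes holo: "\<And>s. s \<ge> 0 \<Longrightarrow> M s holomorphic_on ball 0 1"
    and cont: "continuous_on ({0..} \<times> ball 0 1) (\<lambda>(s, z). M s z)"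
    and init: "\<And>z. z \<in> ball 0 1 \<Longrightarrow> M 0 z = 1 / (1 - z)"
    and pde: "\<And>s z. s \<ge> 0 \<Longrightarrow> z \<in> ball 0 1 \<Longrightarrow>
               ((\<lambda>r. M r z) has_vector_derivative
                  (- (z / 2) * deriv (\<lambda>w. (1 - w) * (M s w)\<^sup>2) z)) (at s within {0..})"
begin

definition uu :: "real \<Rightarrow> complex \<Rightarrow> complex" where "uu t z = sq z * M t z"
definition Ps :: "real \<Rightarrow> complex \<Rightarrow> complex" where
  "Ps t z = (uu t z - 1) * exp (uu t z * of_real t) - cc z * (uu t z + 1)"
definition AA :: "real \<Rightarrow> complex \<Rightarrow> complex" where
  "AA t z = - (z * (sq z * uu t z * deriv (Ps t) z)) + uu t z * Ps t z"

lemma M_at0: assumes t: "t \<ge> 0" shows "M t 0 = 1"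
proof -
  have "((\<lambda>r. M r 0) has_derivative (\<lambda>h. 0)) (at s within {0..})" if "s \<in> {0..}" for s
    using pde[of s 0] that by (simp add: has_vector_derivative_def)
  then obtain c where c: "\<And>x. x \<in> {0::real..} \<Longrightarrow> M x 0 = c"
    using has_derivative_zero_constant[of "{0::real..}" "\<lambda>r. M r 0"] by (auto simp: convex_real_interval)
  have "M t 0 = M 0 0" using c t by auto
  also have "\<dots> = 1" using init[of 0] by simp
  finally show ?thesis .
qed

lemma uu_hol: "t \<ge> 0 \<Longrightarrow> uu t holomorphic_on ball 0 1"
  unfolding uu_def[abs_def] using sq_hol holo by (intro holomorphic_intros) auto

lemma Ps_hol: "t \<ge> 0 \<Longrightarrow> Ps t holomorphic_on ball 0 1"
  unfolding Ps_def[abs_def] using uu_hol cc_hol by (intro holomorphic_intros) auto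

lemma sq_cont: "X \<subseteq> ball 0 1 \<Longrightarrow> continuous_on (T \<times> X) (\<lambda>p. sq (snd p))"
proof -
  assume X: "X \<subseteq> ball 0 1"
  have "continuous_on (ball 0 1) sq" using sq_hol holomorphic_on_imp_continuous_on by blast
  then show ?thesis by (rule continuous_on_compose2) (use X in \<open>auto intro!: continuous_intros\<close>)
qed

lemma cc_cont: "continuous_on (T \<times> ball 0 1) (\<lambda>p. cc (snd p))"
proof -
  have "continuous_on (ball 0 1) cc" using cc_hol holomorphic_on_imp_continuous_on by blast
  then show ?thesis by (rule continuous_on_compose2) (auto intro!: continuous_intros)
qed

lemma Ps_cont: "continuous_on ({0..} \<times> ball 0 1) (\<lambda>(s,z). Ps s z)"
proof -
  have cM: "continuous_on ({0..} \<times> ball 0 1) (\<lambda>p. M (fst p) (snd p))"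
    using cont by (simp add: split_beta)
  have "continuous_on ({0..} \<times> ball 0 1) (\<lambda>p. (sq (snd p) * M (fst p) (snd p) - 1) *
      exp (sq (snd p) * M (fst p) (snd p) * of_real (fst p)) - cc (snd p) * (sq (snd p) * M (fst p) (snd p) + 1))"
    using cM sq_cont[OF order.refl] cc_cont by (intro continuous_intros) auto
  then show ?thesis by (simp add: split_beta Ps_def uu_def)
qed

lemma AA_hol: "t \<ge> 0 \<Longrightarrow> AA t holomorphic_on ball 0 1"
  unfolding AA_def[abs_def] using uu_hol Ps_hol sq_hol holomorphic_deriv[OF Ps_hol]
  by (intro holomorphic_intros) auto

lemma AA_cont: "continuous_on ({0..} \<times> ball 0 (5/8)) (\<lambda>(s,z). AA s z)"
proof -
  have sub: "{0::real..} \<times> ball (0::complex) (5/8) \<subseteq> {0..} \<times> ball 0 1" by auto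
  have cD: "continuous_on ({0..} \<times> ball 0 (5/8)) (\<lambda>p. deriv (Ps (fst p)) (snd p))"
    using deriv_joint_cont[of "{0..}" Ps, OF Ps_hol Ps_cont] by (simp add: split_beta)
  have cM: "continuous_on ({0..} \<times> ball 0 (5/8)) (\<lambda>p. M (fst p) (snd p))"
    using continuous_on_subset[OF cont sub] by (simp add: split_beta)
  have cP: "continuous_on ({0..} \<times> ball 0 (5/8)) (\<lambda>p. Ps (fst p) (snd p))"
    using continuous_on_subset[OF Ps_cont sub] by (simp add: split_beta)
  have cS: "continuous_on ({0..} \<times> ball 0 (5/8)) (\<lambda>p. sq (snd p))"
    by (rule sq_cont) auto
  have "continuous_on ({0..} \<times> ball 0 (5/8)) (\<lambda>p. - (snd p * (sq (snd p) * (sq (snd p) * M (fst p) (snd p)) *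
      deriv (Ps (fst p)) (snd p))) + sq (snd p) * M (fst p) (snd p) * Ps (fst p) (snd p))"
    using cD cM cP cS by (intro continuous_intros) auto
  then show ?thesis by (simp add: split_beta AA_def uu_def)
qed

lemma Ps_init: "z \<in> ball 0 1 \<Longrightarrow> Ps 0 z = 0"
proof -
  assume z: "z \<in> ball 0 1"
  have S: "sq z \<noteq> 0" using sq_nz[OF z] .
  have "M 0 z = 1 / sq z ^ 2" using init[OF z] by (simp add: sq_sq)
  then have "uu 0 z = 1 / sq z" using S by (simp add: uu_def power2_eq_square)
  then show ?thesis using S sq_1[of z]
    by (simp add: Ps_def cc_def field_simps)
qed


lemma Ps_der:
  assumes s: "s \<ge> 0" and z: "z \<in> ball 0 1"
  shows "((\<lambda>r. Ps r z) has_vector_derivative AA s z) (at s within {0..})"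
proof -
  define S where "S = sq z"
  define M0 where "M0 = M s z"
  define Mz where "Mz = deriv (M s) z"
  define E where "E = exp (S * M0 * of_real s)"
  define C where "C = cc z"
  define Mt where "Mt = - (z / 2) * (- (M0^2) + (1 - z) * (2 * M0 * Mz))"
  define u where "u = S * M0"
  define uz where "uz = (- 1 / (2 * S)) * M0 + S * Mz"
  define Cd where "Cd = 2 * (1 / (2 * S)) / (1 + S)^2"
  have dM: "(M s has_field_derivative Mz) (at z)"
    unfolding Mz_def using holomorphic_derivI[OF holo[OF s] open_ball z] .
  have dF: "deriv (\<lambda>w. (1 - w) * (M s w)\<^sup>2) z = - (M0^2) + (1 - z) * (2 * M0 * Mz)"
    by (rule DERIV_imp_deriv) (auto intro!: derivative_eq_intros dM simp: M0_def algebra_simps)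
  have dMt: "((\<lambda>r. M r z) has_vector_derivative Mt) (at s within {0..})"
    using pde[OF s z] unfolding dF Mt_def .
  have dS: "(sq has_field_derivative (- 1 / (2 * S))) (at z)" using sq_deriv[OF z] by (simp add: S_def)
  have dC: "(cc has_field_derivative Cd) (at z)" using cc_deriv[OF z] by (simp add: S_def Cd_def)
  have "(Ps s has_field_derivative uz * E + (u - 1) * (E * (uz * of_real s)) - Cd * (u + 1) - C * uz) (at z)"
  proof -
    have "((\<lambda>w. (sq w * M s w - 1) * exp (sq w * M s w * of_real s) - cc w * (sq w * M s w + 1))
       has_field_derivative
        ((- 1 / (2 * S)) * M s z + sq z * Mz) * exp (sq z * M s z * of_real s) +
        (sq z * M s z - 1) * (exp (sq z * M s z * of_real s) * (((- 1 / (2 * S)) * M s z + sq z * Mz) * of_real s))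
        - (Cd * (sq z * M s z + 1) + cc z * ((- 1 / (2 * S)) * M s z + sq z * Mz))) (at z)"
      by (rule derivative_eq_intros dS dM dC refl | simp add: algebra_simps)+
    then show ?thesis
      by (simp add: Ps_def[abs_def] uu_def S_def M0_def E_def C_def u_def uz_def algebra_simps)
  qed
  then have dPs: "deriv (Ps s) z = uz * E + (u - 1) * (E * (uz * of_real s)) - Cd * (u + 1) - C * uz"
    by (rule DERIV_imp_deriv)
  have din: "((\<lambda>r. S * M r z * of_real r) has_vector_derivative (S * M0 * 1 + S * Mt * of_real s)) (at s within {0..})"
    by (rule derivative_eq_intros dMt refl | simp add: M0_def)+
  have dexp: "((\<lambda>r. exp (S * M r z * of_real r)) has_vector_derivative
       ((S * M0 * 1 + S * Mt * of_real s) * E)) (at s within {0..})"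
    using field_vector_diff_chain_within[OF din, of exp "exp (S * M0 * of_real s)"]
    by (auto simp: o_def E_def M0_def intro: DERIV_exp DERIV_subset)
  have dt: "((\<lambda>r. Ps r z) has_vector_derivative
      (S * Mt * E + (u - 1) * (E * (S * Mt * of_real s + u)) - C * (S * Mt))) (at s within {0..})"
  proof -
    have "((\<lambda>r. (S * M r z - 1) * exp (S * M r z * of_real r) - C * (S * M r z + 1)) has_vector_derivative
      ((S * M0 - 1) * ((S * M0 * 1 + S * Mt * of_real s) * E) + (S * Mt) * E - C * (S * Mt))) (at s within {0..})"
      by (rule derivative_eq_intros dMt dexp refl | simp add: M0_def E_def)+
    then show ?thesis
      by (simp add: Ps_def uu_def S_def C_def u_def algebra_simps)
  qed
  have zS: "z = 1 - S^2" by (simp add: S_def sq_sq)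
  have SS: "S \<noteq> 0" using sq_nz[OF z] by (simp add: S_def)
  have S1: "1 + S \<noteq> 0" using sq_1 by (simp add: S_def)
  have eq: "S * Mt * E + (u - 1) * (E * (S * Mt * of_real s + u)) - C * (S * Mt) = AA s z"
    using alg[OF zS SS S1, of M0 Mz E "of_real s"]
    unfolding AA_def dPs
    by (simp add: Mt_def u_def uz_def C_def Cd_def Ps_def uu_def S_def M0_def E_def cc_def)
  show ?thesis using dt unfolding eq .
qed


lemma Ps_zero:
  assumes t: "t \<ge> 0" and z: "z \<in> ball 0 1"
  shows "Ps t z = 0"
proof (rule coeff_zero[where A=AA and B="\<lambda>s z. sq z * uu s z" and U=uu, OF Ps_hol AA_hol _ uu_hol _ _ Ps_der AA_cont _ Ps_init t z])
  show "\<And>s. 0 \<le> s \<Longrightarrow> (\<lambda>z. sq z * uu s z) holomorphic_on ball 0 1"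
    using sq_hol uu_hol by (intro holomorphic_intros) auto
  show "\<And>s. 0 \<le> s \<Longrightarrow> sq 0 * uu s 0 = 1" by (simp add: uu_def M_at0)
  show "\<And>s. 0 \<le> s \<Longrightarrow> uu s 0 = 1" by (simp add: uu_def M_at0)
  show "\<And>s z. 0 \<le> s \<Longrightarrow> z \<in> ball 0 1 \<Longrightarrow> AA s z = - (z * (sq z * uu s z * deriv (Ps s) z)) + uu s z * Ps s z"
    by (simp add: AA_def)
qed auto

lemma M_ident:
  assumes t: "t \<ge> 0" and z: "z \<in> ball 0 1" and re: "Re (uu t z) > 0"
  shows "M t z - 1 = kappa t ((1 - z) * (M t z)\<^sup>2 - 1)"
proof -
  define u where "u = uu t z"
  define S where "S = sq z"
  have SS: "S \<noteq> 0" using sq_nz[OF z] by (simp add: S_def)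
  have S1: "1 + S \<noteq> 0" using sq_1 by (simp add: S_def)
  have u1: "u + 1 \<noteq> 0"
  proof
    assume "u + 1 = 0"
    then have "Re (u + 1) = 0" by simp
    then show False using re by (simp add: u_def)
  qed
  have uS: "u = S * M t z" by (simp add: u_def S_def uu_def)
  have sq: "csqrt (1 + ((1 - z) * (M t z)\<^sup>2 - 1)) = u"
  proof -
    have "1 + ((1 - z) * (M t z)\<^sup>2 - 1) = u ^ 2"
      by (simp add: uS power_mult_distrib S_def sq_sq)
    then show ?thesis using re csqrt_square[of u] by (simp add: u_def)
  qed
  have P: "(u - 1) * exp (u * of_real t) = cc z * (u + 1)"
    using Ps_zero[OF t z] by (simp add: Ps_def u_def)
  have "xi2 t u = ((u - 1) * exp (u * of_real t)) / (u + 1)" by (simp add: xi2_def)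
  also have "\<dots> = cc z * (u + 1) / (u + 1)" using P by simp
  also have "\<dots> = (1 - S) / (1 + S)" using u1 by (simp add: cc_def S_def)
  finally have xi: "xi2 t u = (1 - S) / (1 + S)" .
  have "kappa t ((1 - z) * (M t z)\<^sup>2 - 1) = ((1 + u) * ((1 - S) / (1 + S)) + (u - 1)) / (1 - (1 - S) / (1 + S))"
    unfolding kappa_def sq xi ..
  also have "\<dots> = M t z - 1"
    using SS S1 unfolding uS by (simp add: divide_simps) (simp add: algebra_simps)
  finally show ?thesis by simp
qed

end


lemma ev_open: "open V \<Longrightarrow> x \<in> V \<Longrightarrow> eventually (\<lambda>w. w \<in> V) (at x)"
  unfolding eventually_at_topological by blast

lemma li_exists:
  fixes f :: "complex \<Rightarrow> complex"
  assumes hol: "f holomorphic_on S" and S: "open S" "0 \<in> S" and f0: "f 0 = 0" and d: "deriv f 0 \<noteq> 0"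
  shows "\<exists>g. local_inverse_at0 f g"
proof -
  obtain r where r: "r > 0" "ball 0 r \<subseteq> S" "open (f ` ball 0 r)" "inj_on f (ball 0 r)"
    using has_complex_derivative_locally_invertible[OF hol S(2) S(1) d] by blast
  define g where "g = inv_into (ball 0 r) f"
  have "open (ball 0 r) \<and> open (f ` ball 0 r) \<and> (0::complex) \<in> ball 0 r \<and> 0 \<in> f ` ball 0 r \<and>
      f ` ball 0 r = f ` ball 0 r \<and> (\<forall>z\<in>ball 0 r. g (f z) = z) \<and>
      (\<forall>w\<in>f ` ball 0 r. g w \<in> ball 0 r \<and> f (g w) = w)"
    using r f0 by (auto simp: g_def inv_into_into f_inv_into_f intro!: image_eqI[of 0 f 0])
  then have "local_inverse_at0 f g"
    unfolding local_inverse_at0_def by blast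
  then show ?thesis by blast
qed

lemma li_tendsto:
  fixes f :: "complex \<Rightarrow> complex"
  assumes hol: "f holomorphic_on S" and S: "open S" "0 \<in> S" and f0: "f 0 = 0"
    and li: "local_inverse_at0 f g"
  shows "(g \<longlongrightarrow> 0) (at 0)"
proof -
  obtain U V where UV: "open U" "open V" "0 \<in> U" "0 \<in> V" "f ` U = V"
    "\<forall>z\<in>U. g (f z) = z" "\<forall>w\<in>V. g w \<in> U \<and> f (g w) = w"
    using li unfolding local_inverse_at0_def by blast
  show ?thesis
  proof (rule tendstoI)
    fix e :: real assume e: "e > 0"
    define B where "B = ball 0 e \<inter> U \<inter> S"
    have oB: "open B" using UV S by (simp add: B_def open_Int)
    have B0: "0 \<in> B" using UV S e by (simp add: B_def)
    have inj: "inj_on f B" by (rule inj_on_inverseI[where g=g]) (use UV in \<open>auto simp: B_def\<close>)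
    have "f holomorphic_on B" using hol by (rule holomorphic_on_subset) (auto simp: B_def)
    then have "open (f ` B)" using open_mapping_thm3 oB inj by blast
    moreover have "0 \<in> f ` B" using B0 f0 by (metis image_eqI)
    ultimately have "eventually (\<lambda>w. w \<in> f ` B) (at 0)" by (rule ev_open)
    then show "eventually (\<lambda>w. dist (g w) 0 < e) (at 0)"
    proof (rule eventually_mono)
      fix w assume "w \<in> f ` B"
      then obtain z where z: "z \<in> B" "w = f z" by blast
      then have "g w = z" using UV by (simp add: B_def)
      then show "dist (g w) 0 < e" using z by (simp add: B_def)
    qed
  qed
qed

definition Kd :: "real \<Rightarrow> complex set" where
  "Kd t = ball 0 1 \<inter> (\<lambda>z. xi2 t (csqrt (1 + z))) -` (- {1})"

lemma one_plus_notin: "(z::complex) \<in> ball 0 1 \<Longrightarrow> 1 + z \<notin> \<real>\<^sub>\<le>\<^sub>0"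
  using one_minus_notin[of "- z"] by simp

lemma csqrt_p1: "csqrt w + 1 \<noteq> 0"
proof
  assume h: "csqrt w + 1 = 0"
  have "Re (csqrt w) \<ge> 0" by (rule Re_csqrt)
  moreover have "csqrt w = -1" using h by (simp add: eq_neg_iff_add_eq_0)
  ultimately show False by simp
qed

lemma xi_hol: "(\<lambda>z. xi2 t (csqrt (1 + z))) holomorphic_on ball 0 1"
  unfolding xi2_def using csqrt_p1 one_plus_notin by (intro holomorphic_intros) auto

lemma Kd_open: "open (Kd t)"
  unfolding Kd_def
  by (rule continuous_open_preimage[OF holomorphic_on_imp_continuous_on[OF xi_hol]]) auto

lemma Kd_0: "0 \<in> Kd t" by (simp add: Kd_def xi2_def)

lemma kappa_hol: "kappa t holomorphic_on Kd t"
proof -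
  have "(\<lambda>z. ((1 + csqrt (1 + z)) * xi2 t (csqrt (1 + z)) + (csqrt (1 + z) - 1))
               / (1 - xi2 t (csqrt (1 + z)))) holomorphic_on Kd t"
  proof -
    have xiK: "(\<lambda>z. xi2 t (csqrt (1 + z))) holomorphic_on Kd t"
      by (rule holomorphic_on_subset[OF xi_hol]) (auto simp: Kd_def)
    show ?thesis
      using one_plus_notin by (intro holomorphic_intros xiK) (auto simp: Kd_def)
  qed
  then show ?thesis by (simp add: kappa_def[abs_def])
qed

lemma kappa_0: "kappa t 0 = 0" by (simp add: kappa_def xi2_def)

lemma kappa_der: "(kappa t has_field_derivative (exp t + 1) / 2) (at 0)"
proof -
  have "((\<lambda>z. ((1 + csqrt (1 + z)) * ((csqrt (1 + z) - 1) / (csqrt (1 + z) + 1) * exp (csqrt (1 + z) * of_real t)) + (csqrt (1 + z) - 1))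
               / (1 - (csqrt (1 + z) - 1) / (csqrt (1 + z) + 1) * exp (csqrt (1 + z) * of_real t))) has_field_derivative (exp t + 1) / 2) (at 0)"
    by (rule derivative_eq_intros refl | simp)+ (simp add: field_simps exp_of_real)
  then show ?thesis by (simp add: kappa_def[abs_def] xi2_def)
qed


theorem mainTheorem3:
  fixes M :: "real \<Rightarrow> complex \<Rightarrow> complex" and t :: real
  assumes t_nonneg: "t \<ge> 0"
    and holo: "\<And>s. s \<ge> 0 \<Longrightarrow> M s holomorphic_on ball 0 1"
    and cont: "continuous_on ({0..} \<times> ball 0 1) (\<lambda>(s, z). M s z)"
    and init: "\<And>z. z \<in> ball 0 1 \<Longrightarrow> M 0 z = 1 / (1 - z)"
    and pde: "\<And>s z. s \<ge> 0 \<Longrightarrow> z \<in> ball 0 1 \<Longrightarrow>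
               ((\<lambda>r. M r z) has_vector_derivative
                  (- (z / 2) * deriv (\<lambda>w. (1 - w) * (M s w)\<^sup>2) z)) (at s within {0..})"
  shows "kappa t 0 = 0
    \<and> (\<exists>g. local_inverse_at0 (kappa t) g)
    \<and> (\<exists>eta. local_inverse_at0 (\<lambda>z. M t z - 1) eta)
    \<and> (\<forall>eta g. local_inverse_at0 (\<lambda>z. M t z - 1) eta \<longrightarrow> local_inverse_at0 (kappa t) g \<longrightarrow>
         (\<forall>\<^sub>F z in at 0.
            S_transform eta z = (z\<^sup>2 + 2 * z - g z) / (z * (1 + z))
          \<and> (z\<^sup>2 + 2 * z - g z) / (z * (1 + z)) = (z + 2) / (z + 1) - g z / (z * (1 + z))))"
proof -
  interpret J: jac M using holo cont init pde by unfold_locales auto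
  define K :: complex where "K = (exp t + 1) / 2"
  have Kder: "(kappa t has_field_derivative K) (at 0)" unfolding K_def by (rule kappa_der)
  have Knz: "K \<noteq> 0"
  proof
    assume "K = 0"
    then have "Re K = 0" by simp
    moreover have "Re K > 0" unfolding K_def by (simp add: Re_exp add_pos_pos)
    ultimately show False by simp
  qed
  have K2: "\<exists>g. local_inverse_at0 (kappa t) g"
    by (rule li_exists[OF kappa_hol Kd_open Kd_0 kappa_0]) (use Kder Knz DERIV_imp_deriv in auto)
  define W where "W = ball 0 1 \<inter> J.uu t -` {w. Re w > 0}"
  have oW: "open W" unfolding W_def
    by (rule continuous_open_preimage[OF holomorphic_on_imp_continuous_on[OF J.uu_hol[OF t_nonneg]]])
       (auto simp: open_halfspace_Re_gt)
  have W0: "0 \<in> W" by (simp add: W_def J.uu_def J.M_at0[OF t_nonneg])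
  have ident: "M t z - 1 = kappa t ((1 - z) * (M t z)\<^sup>2 - 1)" if "z \<in> W" for z
    using J.M_ident[OF t_nonneg] that by (auto simp: W_def)
  have holM1: "(\<lambda>z. M t z - 1) holomorphic_on ball 0 1" using holo[OF t_nonneg] by (intro holomorphic_intros)
  define m1 where "m1 = deriv (M t) 0"
  have dM: "(M t has_field_derivative m1) (at 0)"
    unfolding m1_def by (rule holomorphic_derivI[OF holo[OF t_nonneg] open_ball]) auto
  have dM1: "((\<lambda>z. M t z - 1) has_field_derivative m1) (at 0)"
    using dM by (auto intro!: derivative_eq_intros)
  have m1nz: "m1 \<noteq> 0"
  proof
    assume m0: "m1 = 0"
    define gg where "gg = (\<lambda>z. (1 - z) * (M t z)\<^sup>2 - 1)"
    have dg: "(gg has_field_derivative (2 * m1 - 1)) (at 0)"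
    proof -
      have "(gg has_field_derivative (- ((M t 0)\<^sup>2) + (1 - 0) * (2 * M t 0 * m1))) (at 0)"
        unfolding gg_def by (rule derivative_eq_intros dM refl | simp)+
      then show ?thesis by (simp add: J.M_at0[OF t_nonneg])
    qed
    have g0: "gg 0 = 0" by (simp add: gg_def J.M_at0[OF t_nonneg])
    have "((kappa t \<circ> gg) has_field_derivative K * (2 * m1 - 1)) (at 0)"
      by (rule DERIV_chain[OF _ dg]) (simp add: g0 Kder)
    then have "((\<lambda>z. M t z - 1) has_field_derivative K * (2 * m1 - 1)) (at 0)"
      by (rule has_field_derivative_transform_within_open[OF _ oW W0]) (simp add: ident gg_def)
    then have "m1 = K * (2 * m1 - 1)" using dM1 DERIV_unique by blast
    then show False using m0 Knz by simp
  qed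
  have K3: "\<exists>eta. local_inverse_at0 (\<lambda>z. M t z - 1) eta"
    by (rule li_exists[OF holM1]) (use J.M_at0[OF t_nonneg] dM1 m1nz DERIV_imp_deriv in auto)
  have K4: "\<forall>\<^sub>F z in at 0.
            S_transform eta z = (z\<^sup>2 + 2 * z - g z) / (z * (1 + z))
          \<and> (z\<^sup>2 + 2 * z - g z) / (z * (1 + z)) = (z + 2) / (z + 1) - g z / (z * (1 + z))"
    if Le: "local_inverse_at0 (\<lambda>z. M t z - 1) eta" and Lg: "local_inverse_at0 (kappa t) g" for eta g
  proof -
    obtain U1 V1 where UV1: "open U1" "open V1" "0 \<in> U1" "0 \<in> V1"
      "\<forall>z\<in>U1. eta (M t z - 1) = z" "\<forall>w\<in>V1. eta w \<in> U1 \<and> M t (eta w) - 1 = w"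
      using Le unfolding local_inverse_at0_def by blast
    obtain U2 V2 where UV2: "open U2" "open V2" "0 \<in> U2" "0 \<in> V2"
      "\<forall>z\<in>U2. g (kappa t z) = z" "\<forall>w\<in>V2. g w \<in> U2 \<and> kappa t (g w) = w"
      using Lg unfolding local_inverse_at0_def by blast
    have te: "(eta \<longlongrightarrow> 0) (at 0)"
      by (rule li_tendsto[OF holM1 open_ball _ _ Le]) (use J.M_at0[OF t_nonneg] in auto)
    have "((\<lambda>w. (1 - eta w) * (1 + w)\<^sup>2 - 1) \<longlongrightarrow> (1 - 0) * (1 + 0)\<^sup>2 - 1) (at 0)"
      by (intro tendsto_intros te)
    then have ty: "((\<lambda>w. (1 - eta w) * (1 + w)\<^sup>2 - 1) \<longlongrightarrow> 0) (at (0::complex))" by simp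
    have e1: "\<forall>\<^sub>F w in at 0. w \<in> V1" by (rule ev_open) (use UV1 in auto)
    have e2: "\<forall>\<^sub>F w in at 0. w \<in> V2" by (rule ev_open) (use UV2 in auto)
    have e3: "\<forall>\<^sub>F w in at 0. eta w \<in> W" by (rule topological_tendstoD[OF te oW W0])
    have e4: "\<forall>\<^sub>F w in at 0. (1 - eta w) * (1 + w)\<^sup>2 - 1 \<in> U2"
      by (rule topological_tendstoD[OF ty]) (use UV2 in auto)
    have e5: "\<forall>\<^sub>F w in at (0::complex). w \<noteq> 0" by (simp add: eventually_at_filter)
    have e6: "\<forall>\<^sub>F w in at (0::complex). w \<in> ball 0 1" by (rule ev_open) auto
    show ?thesis
      using e1 e2 e3 e4 e5 e6
    proof eventually_elim
      case (elim w)
      define z where "z = eta w"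
      have zU: "z \<in> U1" and Mz: "M t z - 1 = w" using UV1 elim by (auto simp: z_def)
      have "w = kappa t ((1 - z) * (M t z)\<^sup>2 - 1)" using ident[of z] elim Mz by (simp add: z_def)
      also have "(1 - z) * (M t z)\<^sup>2 - 1 = (1 - z) * (1 + w)\<^sup>2 - 1" using Mz by (simp add: algebra_simps)
      finally have wk: "w = kappa t ((1 - z) * (1 + w)\<^sup>2 - 1)" .
      have "g w = g (kappa t ((1 - z) * (1 + w)\<^sup>2 - 1))" using wk by simp
      also have "\<dots> = (1 - z) * (1 + w)\<^sup>2 - 1" using UV2 elim by (simp add: z_def)
      finally have gw: "g w = (1 - z) * (1 + w)\<^sup>2 - 1" .
      have w0: "w \<noteq> 0" using elim by simp
      have w1: "1 + w \<noteq> 0"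
      proof
        assume "1 + w = 0"
        then have "w = -1" by (simp add: eq_neg_iff_add_eq_0 add.commute)
        then show False using elim by simp
      qed
      have w1': "w + 1 \<noteq> 0" using w1 by (simp add: add.commute)
      have num: "w\<^sup>2 + 2 * w - g w = z * (1 + w)\<^sup>2" unfolding gw by (simp add: algebra_simps power2_eq_square)
      show ?case
      proof
        show "S_transform eta w = (w\<^sup>2 + 2 * w - g w) / (w * (1 + w))"
          unfolding num S_transform_def z_def[symmetric] using w0 w1
          by (simp add: power2_eq_square divide_simps)
        show "(w\<^sup>2 + 2 * w - g w) / (w * (1 + w)) = (w + 2) / (w + 1) - g w / (w * (1 + w))"
          using w0 w1 w1' by (simp add: power2_eq_square divide_simps) (simp add: algebra_simps)
      qed
    qed
  qed
  show ?thesis using kappa_0 K2 K3 K4 by blast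
qed

end
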